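(* Let $n>d\ge 1$. Let $(x_i)_{i=1}^n$ be i.i.d. with $x_i\sim N(0,I_d)$, let $\bar{x}_i=(1,x_i^{\top})^{\top}\in\mathbb{R}^{d+1}$, and suppose the responses $y_1,\dots,y_n\in\{-1,1\}$ are conditionally independent given $(x_i)_{i=1}^n$ with $\frac{y_i+1}{2}\,\big|\,x_i\sim\mathrm{Bernoulli}(\Phi(\bar{x}_i\cdot\bar{\beta}))$ for some fixed $\bar{\beta}=(\beta_0,\beta^{\top})$, $\beta_0\in\mathbb{R}$, $\beta\in\mathbb{R}^d$. Let $\gamma_0=|\beta|$ (so $\gamma_0^2=\mathrm{Var}(x_i\cdot\beta)$), let $Z\sim N(0,1)$ and $h=\mathbb{E}[\Phi(-|\beta_0+\gamma_0Z|)]$ (so $h>0$), and let $$s^*=\inf_{u\in\mathbb{S}^d}\sum_{i=1}^n\mathds{1}_{(-\infty,0]}(y_i\bar{x}_i\cdot u).$$ Then for every $\epsilon>0$, with probability at least $1-\exp(-2\epsilon^2 n)$, $$s^*\ge n\Bigg(h-\epsilon-\bigg(\frac{2\ln(en/(d+1))}{n/(d+1)}\bigg)^{1/2}\Bigg).$$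
   Context: $\Phi$ denotes the standard normal c.d.f. and $\mathbb{S}^d=\{v\in\mathbb{R}^{d+1}:|v|=1\}$. *)

theory Defs
  imports "HOL-Probability.Probability"
begin

definition std_normal :: "real measure" where
  "std_normal = density lborel std_normal_density"

definition Phi :: "real \<Rightarrow> real" where
  "Phi t = measure std_normal {..t}"

(* N(0, I_d) on R^d, with d = CARD('d) *)
definition gauss_vec :: "(real^'d) measure" where
  "gauss_vec = density lborel (\<lambda>x. \<Prod>i\<in>UNIV. std_normal_density (x $ i))"

definition probit_pair :: "real \<Rightarrow> real^'d \<Rightarrow> ((real^'d) \<times> real) measure" where
  "probit_pair \<beta>0 \<beta> = bind gauss_vec
     (\<lambda>x. distr (measure_pmf (bernoulli_pmf (Phi (\<beta>0 + x \<bullet> \<beta>)))) borel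
                (\<lambda>b. (x, if b then 1 else -1)))"

definition probit_sample :: "nat \<Rightarrow> real \<Rightarrow> real^'d \<Rightarrow> (nat \<Rightarrow> (real^'d) \<times> real) measure" where
  "probit_sample n \<beta>0 \<beta> = PiM {..<n} (\<lambda>_. probit_pair \<beta>0 \<beta>)"

definition sstar :: "nat \<Rightarrow> (nat \<Rightarrow> (real^'d) \<times> real) \<Rightarrow> real" where
  "sstar n \<omega> = (INF u\<in>sphere (0::real \<times> (real^'d)) 1.
      real (card {i\<in>{..<n}. snd (\<omega> i) * ((1, fst (\<omega> i)) \<bullet> u) \<le> 0}))"

end

theory Submission
  imports Defs "HOL-Analysis.Analysis" "HOL-Probability.Hoeffding"
begin

definition shatters :: "'a set set \<Rightarrow> 'a set \<Rightarrow> bool" where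
  "shatters F T \<longleftrightarrow> (\<forall>P\<subseteq>T. \<exists>A\<in>F. A \<inter> T = P)"

lemma pajor:
  assumes "finite S" "\<forall>A\<in>F. A \<subseteq> S"
  shows "card F \<le> card {T. T \<subseteq> S \<and> shatters F T}"
  using assms
proof (induction S arbitrary: F rule: finite_induct)
  case empty
  then have "F \<subseteq> {{}}" by auto
  then show ?case
  proof (cases "F = {}")
    case True then show ?thesis by simp
  next
    case False
    with \<open>F \<subseteq> {{}}\<close> have "F = {{}}" by auto
    then have "{T. T \<subseteq> {} \<and> shatters F T} = {{}}" by (auto simp: shatters_def)
    then show ?thesis using \<open>F = {{}}\<close> by simp
  qed
next
  case (insert x S)
  define Fa where "Fa = {A\<in>F. x \<notin> A}"
  define Fb where "Fb = {A\<in>F. x \<in> A}"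
  define F0 where "F0 = (\<lambda>A. A - {x}) ` F"
  define F1 where "F1 = {B. B \<subseteq> S \<and> B \<in> F \<and> insert x B \<in> F}"
  have finF: "finite F" using insert.prems insert.hyps(1)
    by (meson Pow_iff finite_Pow_iff finite_insert finite_subset subsetI)
  have "F = Fa \<union> Fb" "Fa \<inter> Fb = {}" by (auto simp: Fa_def Fb_def)
  then have cF: "card F = card Fa + card Fb"
    using finF by (metis card_Un_disjoint finite_Un)
  have inj: "inj_on (\<lambda>A. A - {x}) Fb"
    by (rule inj_onI) (simp add: Fb_def, metis insert_Diff)
  have F0eq: "F0 = Fa \<union> (\<lambda>A. A - {x}) ` Fb"
  proof -
    have "F0 = (\<lambda>A. A - {x}) ` Fa \<union> (\<lambda>A. A - {x}) ` Fb"
      unfolding F0_def \<open>F = Fa \<union> Fb\<close>[symmetric] by (simp add: \<open>F = Fa \<union> Fb\<close> image_Un)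
    moreover have "(\<lambda>A. A - {x}) ` Fa = Fa"
      by (rule image_cong[OF refl, where g=id, simplified]) (auto simp: Fa_def)
    ultimately show ?thesis by simp
  qed
  have F1eq: "F1 = Fa \<inter> (\<lambda>A. A - {x}) ` Fb"
  proof (rule set_eqI, rule iffI)
    fix B assume "B \<in> F1"
    then have B: "B \<subseteq> S" "B \<in> F" "insert x B \<in> F" by (auto simp: F1_def)
    then have "x \<notin> B" using insert.hyps(2) by auto
    moreover have "B = insert x B - {x}" using \<open>x \<notin> B\<close> by simp
    ultimately show "B \<in> Fa \<inter> (\<lambda>A. A - {x}) ` Fb" using B
      unfolding Fa_def Fb_def by blast
  next
    fix B assume "B \<in> Fa \<inter> (\<lambda>A. A - {x}) ` Fb"
    then obtain A where A: "B \<in> F" "x \<notin> B" "A \<in> F" "x \<in> A" "B = A - {x}"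
      unfolding Fa_def Fb_def by blast
    then have "insert x B = A" by auto
    moreover have "B \<subseteq> S" using A insert.prems by auto
    ultimately show "B \<in> F1" using A by (auto simp: F1_def)
  qed
  have finFa: "finite Fa" "finite Fb" using finF by (auto simp: Fa_def Fb_def)
  have cF0: "card F0 + card F1 = card F"
    unfolding F0eq F1eq cF
    using card_Un_Int[of Fa "(\<lambda>A. A - {x}) ` Fb"] finFa card_image[OF inj] by simp
  have s0: "\<forall>A\<in>F0. A \<subseteq> S" using insert.prems by (auto simp: F0_def)
  have s1: "\<forall>A\<in>F1. A \<subseteq> S" by (auto simp: F1_def)
  have IH0: "card F0 \<le> card {T. T \<subseteq> S \<and> shatters F0 T}" using insert.IH s0 by blast
  have IH1: "card F1 \<le> card {T. T \<subseteq> S \<and> shatters F1 T}" using insert.IH s1 by blast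
  define Sh0 where "Sh0 = {T. T \<subseteq> S \<and> shatters F0 T}"
  define Sh1 where "Sh1 = {T. T \<subseteq> S \<and> shatters F1 T}"
  have fin0: "finite Sh0" "finite Sh1" using insert.hyps(1) by (auto simp: Sh0_def Sh1_def)
  have sub: "Sh0 \<union> insert x ` Sh1 \<subseteq> {T. T \<subseteq> insert x S \<and> shatters F T}"
  proof
    fix T assume "T \<in> Sh0 \<union> insert x ` Sh1"
    then show "T \<in> {T. T \<subseteq> insert x S \<and> shatters F T}"
    proof
      assume T: "T \<in> Sh0"
      then have xT: "x \<notin> T" using insert.hyps(2) by (auto simp: Sh0_def)
      have "shatters F T" unfolding shatters_def
      proof (intro allI impI)
        fix P assume "P \<subseteq> T"
        then obtain B where "B \<in> F0" "B \<inter> T = P" using T \<open>P \<subseteq> T\<close> unfolding Sh0_def shatters_def by blast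
        then obtain A where "A \<in> F" "B = A - {x}" by (auto simp: F0_def)
        then have "A \<inter> T = P" using \<open>B \<inter> T = P\<close> xT by auto
        then show "\<exists>A\<in>F. A \<inter> T = P" using \<open>A \<in> F\<close> by blast
      qed
      then show ?thesis using T by (auto simp: Sh0_def)
    next
      assume "T \<in> insert x ` Sh1"
      then obtain T' where T': "T' \<in> Sh1" "T = insert x T'" by auto
      have xT': "x \<notin> T'" using T' insert.hyps(2) by (auto simp: Sh1_def)
      have "shatters F T" unfolding shatters_def
      proof (intro allI impI)
        fix P assume P: "P \<subseteq> T"
        have "P - {x} \<subseteq> T'" using P T' by auto
        then obtain B where B: "B \<in> F1" "B \<inter> T' = P - {x}" using T'(1) unfolding Sh1_def shatters_def by blast
        have xB: "x \<notin> B" using B insert.hyps(2) by (auto simp: F1_def)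
        show "\<exists>A\<in>F. A \<inter> T = P"
        proof (cases "x \<in> P")
          case True
          have "insert x B \<inter> T = P" using B xB True T' P by auto
          then show ?thesis using B by (auto simp: F1_def)
        next
          case False
          have "B \<inter> T = P" using B xB False T' P by auto
          then show ?thesis using B by (auto simp: F1_def)
        qed
      qed
      then show ?thesis using T' by (auto simp: Sh1_def)
    qed
  qed
  have disj: "Sh0 \<inter> insert x ` Sh1 = {}" using insert.hyps(2) by (auto simp: Sh0_def)
  have "card (Sh0 \<union> insert x ` Sh1) = card Sh0 + card (insert x ` Sh1)"
    using fin0 disj by (simp add: card_Un_disjoint)
  also have "card (insert x ` Sh1) = card Sh1"
  proof (rule card_image, rule inj_onI)
    fix A B assume "A \<in> Sh1" "B \<in> Sh1" "insert x A = insert x B"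
    then show "A = B" using insert.hyps(2) unfolding Sh1_def
      by (metis (no_types, lifting) Diff_insert_absorb mem_Collect_eq subsetD)
  qed
  finally have "card F \<le> card (Sh0 \<union> insert x ` Sh1)"
    using IH0 IH1 cF0 unfolding Sh0_def Sh1_def by linarith
  also have "\<dots> \<le> card {T. T \<subseteq> insert x S \<and> shatters F T}"
    by (rule card_mono[OF _ sub]) (use insert.hyps(1) in auto)
  finally show ?case .
qed

lemma binom_sum_bound:
  fixes n D :: nat
  assumes "1 \<le> D" "D \<le> n"
  shows "(\<Sum>k\<le>D. real (n choose k)) \<le> (exp 1 * real n / real D) ^ D"
proof -
  define r where "r = real D / real n"
  have r: "0 < r" "r \<le> 1" using assms by (auto simp: r_def)
  have "(\<Sum>k\<le>D. real (n choose k)) * r ^ D = (\<Sum>k\<le>D. real (n choose k) * r ^ D)"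
    by (simp add: sum_distrib_right)
  also have "\<dots> \<le> (\<Sum>k\<le>D. real (n choose k) * r ^ k)"
    by (intro sum_mono mult_left_mono power_decreasing) (use r in auto)
  also have "\<dots> \<le> (\<Sum>k\<le>n. real (n choose k) * r ^ k)"
    by (intro sum_mono2) (use assms r in auto)
  also have "\<dots> = (r + 1) ^ n"
    by (subst binomial_ring) simp
  also have "\<dots> \<le> exp r ^ n"
    by (intro power_mono) (use r in \<open>auto simp: add.commute exp_ge_add_one_self\<close>)
  also have "\<dots> = exp 1 ^ D"
    using assms by (simp add: r_def exp_of_nat_mult[symmetric])
  finally have "(\<Sum>k\<le>D. real (n choose k)) \<le> exp 1 ^ D / r ^ D"
    using r by (simp add: field_simps)
  also have "\<dots> = (exp 1 * real n / real D) ^ D"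
    using assms by (simp add: r_def power_divide power_mult_distrib field_simps)
  finally show ?thesis .
qed

lemma card_small_subsets:
  assumes "finite S"
  shows "card {T. T \<subseteq> S \<and> card T \<le> D} = (\<Sum>k\<le>D. card S choose k)"
proof -
  have "{T. T \<subseteq> S \<and> card T \<le> D} = (\<Union>k\<le>D. {T. T \<subseteq> S \<and> card T = k})" by auto
  moreover have "card (\<Union>k\<le>D. {T. T \<subseteq> S \<and> card T = k}) = (\<Sum>k\<le>D. card {T. T \<subseteq> S \<and> card T = k})"
    by (rule card_UN_disjoint) (use assms in auto)
  ultimately show ?thesis using n_subsets[OF assms] by simp
qed

lemma dependent_family:
  fixes a :: "nat \<Rightarrow> 'v::euclidean_space"
  assumes "finite T" "card T > DIM('v)"
  shows "\<exists>c. (\<Sum>i\<in>T. c i *\<^sub>R a i) = 0 \<and> (\<exists>i\<in>T. c i > 0)"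
proof -
  have "\<exists>c. (\<Sum>i\<in>T. c i *\<^sub>R a i) = 0 \<and> (\<exists>i\<in>T. c i \<noteq> 0)"
  proof (cases "inj_on a T")
    case True
    then have "card (a ` T) > DIM('v)" using assms by (simp add: card_image)
    then have "dependent (a ` T)" by (intro dependent_biggerset) auto
    then obtain T' U where TU: "finite T'" "T' \<subseteq> a ` T" "(\<Sum>v\<in>T'. U v *\<^sub>R v) = 0" "\<exists>v\<in>T'. U v \<noteq> 0"
      unfolding dependent_explicit by blast
    define c where "c i = (if a i \<in> T' then U (a i) else 0)" for i
    have "(\<Sum>i\<in>T. c i *\<^sub>R a i) = (\<Sum>v\<in>a ` T. (if v \<in> T' then U v else 0) *\<^sub>R v)"
      using sum.reindex[OF True, of "\<lambda>v. (if v \<in> T' then U v else 0) *\<^sub>R v"] by (simp add: c_def)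
    also have "\<dots> = (\<Sum>v\<in>T'. U v *\<^sub>R v)"
      using TU(2) assms(1) by (intro sum.mono_neutral_cong_right) auto
    finally have "(\<Sum>i\<in>T. c i *\<^sub>R a i) = 0" using TU by simp
    moreover obtain v where "v \<in> T'" "U v \<noteq> 0" using TU by blast
    then obtain i where "i \<in> T" "a i = v" using TU(2) by blast
    then have "c i \<noteq> 0" using \<open>v \<in> T'\<close> \<open>U v \<noteq> 0\<close> by (simp add: c_def)
    ultimately show ?thesis using \<open>i \<in> T\<close> by blast
  next
    case False
    then obtain i j where ij: "i \<in> T" "j \<in> T" "i \<noteq> j" "a i = a j" unfolding inj_on_def by blast
    define c where "c k = (if k = i then 1 else if k = j then -1 else 0::real)" for k
    have "(\<Sum>k\<in>T. c k *\<^sub>R a k) = (\<Sum>k\<in>{i,j}. c k *\<^sub>R a k)"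
      using ij assms(1) by (intro sum.mono_neutral_cong_right) (auto simp: c_def)
    also have "\<dots> = 0" using ij by (simp add: c_def)
    finally show ?thesis using ij by (intro exI[of _ c]) (auto simp: c_def)
  qed
  then obtain c where c: "(\<Sum>i\<in>T. c i *\<^sub>R a i) = 0" "\<exists>i\<in>T. c i \<noteq> 0" by blast
  show ?thesis
  proof (cases "\<exists>i\<in>T. c i > 0")
    case True then show ?thesis using c by blast
  next
    case False
    then obtain i where "i \<in> T" "c i < 0" using c by force
    moreover have "(\<Sum>i\<in>T. (- c i) *\<^sub>R a i) = 0" using c by (simp add: sum_negf)
    ultimately show ?thesis by (intro exI[of _ "\<lambda>i. - c i"]) auto
  qed
qed

lemma no_shatter:
  fixes a :: "nat \<Rightarrow> 'v::euclidean_space"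
  assumes "finite T" "card T > DIM('v)" "T \<subseteq> I"
  shows "\<not> shatters {{i\<in>I. a i \<bullet> u > 0} | u. True} T"
proof
  assume sh: "shatters {{i\<in>I. a i \<bullet> u > 0} | u. True} T"
  obtain c where c: "(\<Sum>i\<in>T. c i *\<^sub>R a i) = 0" "\<exists>i\<in>T. c i > 0"
    using dependent_family[OF assms(1,2)] by blast
  define P where "P = {i\<in>T. c i > 0}"
  have "P \<subseteq> T" by (auto simp: P_def)
  then obtain A where "A \<in> {{i\<in>I. a i \<bullet> u > 0} | u. True}" "A \<inter> T = P"
    using sh unfolding shatters_def by blast
  then obtain u where u: "{i\<in>I. a i \<bullet> u > 0} \<inter> T = P" by blast
  have "0 = (\<Sum>i\<in>T. c i *\<^sub>R a i) \<bullet> u" using c by simp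
  also have "\<dots> = (\<Sum>i\<in>T. c i * (a i \<bullet> u))" by (simp add: inner_sum_left)
  also have "\<dots> > 0"
  proof -
    obtain i0 where i0: "i0 \<in> T" "c i0 > 0" using c by blast
    have "i0 \<in> P" using i0 by (simp add: P_def)
    then have "a i0 \<bullet> u > 0" using u by blast
    then have "c i0 * (a i0 \<bullet> u) > 0" using i0 by simp
    moreover have "\<forall>i\<in>T. c i * (a i \<bullet> u) \<ge> 0"
    proof
      fix i assume "i \<in> T"
      show "c i * (a i \<bullet> u) \<ge> 0"
      proof (cases "c i > 0")
        case True
        then have "i \<in> P" using \<open>i \<in> T\<close> by (simp add: P_def)
        then have "a i \<bullet> u > 0" using u by blast
        then show ?thesis using True by simp
      next
        case False
        then have "i \<notin> P" by (simp add: P_def)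
        then have "\<not> (a i \<bullet> u > 0)" using u \<open>i \<in> T\<close> assms(3) by blast
        then show ?thesis using False by (simp add: mult_nonpos_nonpos)
      qed
    qed
    ultimately show ?thesis using i0 assms(1)
      by (intro sum_pos2[of T i0]) auto
  qed
  finally show False by simp
qed

lemma pattern_count:
  fixes a :: "nat \<Rightarrow> 'v::euclidean_space"
  assumes "DIM('v) \<le> n"
  shows "real (card {{i\<in>{..<n}. a i \<bullet> u > 0} | u. True}) \<le> (exp 1 * real n / real DIM('v)) ^ DIM('v)"
proof -
  let ?F = "{{i\<in>{..<n}. a i \<bullet> u > 0} | u. True}"
  have "card ?F \<le> card {T. T \<subseteq> {..<n} \<and> shatters ?F T}"
    by (rule pajor) auto
  also have "\<dots> \<le> card {T. T \<subseteq> {..<n} \<and> card T \<le> DIM('v)}"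
  proof (rule card_mono)
    show "{T. T \<subseteq> {..<n} \<and> shatters ?F T} \<subseteq> {T. T \<subseteq> {..<n} \<and> card T \<le> DIM('v)}"
    proof safe
      fix T assume "T \<subseteq> {..<n}" "shatters ?F T"
      moreover have "finite T" using \<open>T \<subseteq> {..<n}\<close> finite_subset by blast
      ultimately show "card T \<le> DIM('v)" using no_shatter[where T=T and a=a and I="{..<n}"]
        using not_le \<open>T \<subseteq> {..<n}\<close> by blast
    qed
  qed auto
  also have "\<dots> = (\<Sum>k\<le>DIM('v). n choose k)" by (subst card_small_subsets) auto
  finally have "real (card ?F) \<le> (\<Sum>k\<le>DIM('v). real (n choose k))" by (simp flip: of_nat_sum)
  also have "\<dots> \<le> (exp 1 * real n / real DIM('v)) ^ DIM('v)"
    by (rule binom_sum_bound) (use assms in auto)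
  finally show ?thesis .
qed

lemma prob_space_std_normal: "prob_space std_normal"
  unfolding std_normal_def by (rule prob_space_normal_density) simp

lemma sets_std_normal[simp, measurable_cong]: "sets std_normal = sets borel"
  by (simp add: std_normal_def)

lemma space_std_normal[simp]: "space std_normal = UNIV"
  by (simp add: std_normal_def)

lemma Phi_nonneg: "0 \<le> Phi t"
  by (simp add: Phi_def)

lemma Phi_le_1: "Phi t \<le> 1"
  unfolding Phi_def using prob_space.prob_le_1[OF prob_space_std_normal] by blast

lemma Phi_mono: "s \<le> t \<Longrightarrow> Phi s \<le> Phi t"
  unfolding Phi_def
  by (intro finite_measure.finite_measure_mono[OF prob_space.axioms(1)[OF prob_space_std_normal]]) auto

lemma Phi_measurable[measurable]: "Phi \<in> borel_measurable borel"
  by (rule borel_measurable_mono) (auto simp: mono_def Phi_mono)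

lemma std_normal_uminus: "distr std_normal borel uminus = std_normal"
proof -
  have "std_normal = density (distr lborel borel uminus) std_normal_density"
    by (simp add: std_normal_def lborel_distr_uminus)
  also have "\<dots> = distr (density lborel (\<lambda>x. std_normal_density (- x))) borel uminus"
    by (rule density_distr) auto
  also have "(\<lambda>x. ennreal (std_normal_density (- x))) = (\<lambda>x. ennreal (std_normal_density x))"
    by (simp add: normal_density_def)
  finally show ?thesis by (simp add: std_normal_def)
qed

lemma std_normal_point: "measure std_normal {s} = 0"
proof -
  have "{s} \<in> null_sets std_normal"
  proof -
    have "AE x in lborel. x \<in> {s} \<longrightarrow> ennreal (std_normal_density x) = 0"
      by (rule eventually_mono[OF AE_lborel_singleton[of s]]) simp
    then show ?thesis unfolding std_normal_def by (subst null_sets_density_iff) auto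
  qed
  then show ?thesis by (simp add: measure_def null_setsD1)
qed

lemma Phi_neg: "Phi (- s) = 1 - Phi s"
proof -
  interpret P: prob_space std_normal by (rule prob_space_std_normal)
  have "Phi (- s) = measure (distr std_normal borel uminus) {..- s}"
    by (simp add: Phi_def std_normal_uminus)
  also have "\<dots> = measure std_normal (uminus -` {..- s})"
    by (subst measure_distr) auto
  also have "uminus -` {..- s} = {s..}" by auto
  also have "{s..} = (UNIV - {..s}) \<union> {s}" by auto
  also have "measure std_normal \<dots> = measure std_normal (UNIV - {..s}) + measure std_normal {s}"
    by (intro P.finite_measure_Union) auto
  also have "measure std_normal (UNIV - {..s}) = 1 - Phi s"
    using P.prob_compl[of "{..s}"] by (simp add: Phi_def)
  finally show ?thesis by (simp add: std_normal_point)
qed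

lemma Phi_0: "Phi 0 = 1/2"
  using Phi_neg[of 0] by simp

lemma Phi_abs_le: "Phi (- \<bar>s\<bar>) \<le> Phi s" "Phi (- \<bar>s\<bar>) \<le> 1 - Phi s"
proof -
  show "Phi (- \<bar>s\<bar>) \<le> Phi s" by (rule Phi_mono) simp
  show "Phi (- \<bar>s\<bar>) \<le> 1 - Phi s" using Phi_neg[of s] Phi_mono[of "- \<bar>s\<bar>" "- s"] by simp
qed

abbreviation QN :: "(real^'d \<Rightarrow> real) measure" where
  "QN \<equiv> PiM Basis (\<lambda>_. std_normal)"

lemma gauss_density_Basis:
  "(\<Prod>i\<in>UNIV. std_normal_density ((x::real^'d) $ i)) = (\<Prod>b\<in>Basis. std_normal_density (x \<bullet> b))"
proof -
  have B: "(Basis :: (real^'d) set) = range (\<lambda>i. axis i 1)"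
    by (auto simp: Basis_vec_def)
  have inj: "inj (\<lambda>i::'d. axis i (1::real))"
    by (auto simp: inj_def axis_eq_axis)
  show ?thesis
    unfolding B by (subst prod.reindex[OF inj]) (simp add: inner_axis)
qed

lemma PiM_lborel_density:
  "density (PiM Basis (\<lambda>_::real^'d. lborel)) (\<lambda>f. \<Prod>b\<in>Basis. ennreal (std_normal_density (f b)))
     = (QN :: (real^'d \<Rightarrow> real) measure)"
proof -
  interpret S: product_sigma_finite "\<lambda>_::real^'d. std_normal"
    unfolding product_sigma_finite_def using prob_space_imp_sigma_finite[OF prob_space_std_normal] by blast
  interpret L: product_sigma_finite "\<lambda>_::real^'d. lborel"
    unfolding product_sigma_finite_def using lborel.sigma_finite_measure_axioms by blast
  show ?thesis
  proof (rule S.PiM_eqI)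
    show "finite (Basis :: (real^'d) set)" by simp
    show "sets (density (PiM Basis (\<lambda>_::real^'d. lborel)) (\<lambda>f. \<Prod>b\<in>Basis. ennreal (std_normal_density (f b))))
       = sets (QN :: (real^'d \<Rightarrow> real) measure)"
      by (simp cong: sets_PiM_cong)
  next
    fix A :: "real^'d \<Rightarrow> real set" assume A: "\<And>i. i \<in> Basis \<Longrightarrow> A i \<in> sets std_normal"
    have "emeasure (density (PiM Basis (\<lambda>_::real^'d. lborel)) (\<lambda>f. \<Prod>b\<in>Basis. ennreal (std_normal_density (f b)))) (PiE Basis A)
      = (\<integral>\<^sup>+f. (\<Prod>b\<in>Basis. ennreal (std_normal_density (f b))) * indicator (PiE Basis A) f \<partial>PiM Basis (\<lambda>_. lborel))"
      using A by (subst emeasure_density) (auto intro!: sets_PiM_I_finite)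
    also have "\<dots> = (\<integral>\<^sup>+f. (\<Prod>b\<in>Basis. ennreal (std_normal_density (f b)) * indicator (A b) (f b)) \<partial>PiM Basis (\<lambda>_. lborel))"
    proof (rule nn_integral_cong)
      fix f :: "real^'d \<Rightarrow> real" assume f: "f \<in> space (PiM Basis (\<lambda>_::real^'d. lborel))"
      show "(\<Prod>b\<in>Basis. ennreal (std_normal_density (f b))) * indicator (PiE Basis A) f
          = (\<Prod>b\<in>Basis. ennreal (std_normal_density (f b)) * indicator (A b) (f b))"
      proof (cases "f \<in> PiE Basis A")
        case True
        then have "\<And>b. b \<in> Basis \<Longrightarrow> f b \<in> A b" by auto
        then show ?thesis using True by (simp add: indicator_def)
      next
        case False
        then obtain b where "b \<in> Basis" "f b \<notin> A b" using f by (auto simp: space_PiM PiE_def)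
        then show ?thesis using False by (auto simp: prod_zero_iff indicator_def intro!: bexI[of _ b])
      qed
    qed
    also have "\<dots> = (\<Prod>b\<in>Basis. \<integral>\<^sup>+x. ennreal (std_normal_density x) * indicator (A b) x \<partial>lborel)"
      using A by (subst L.product_nn_integral_prod) auto
    also have "\<dots> = (\<Prod>b\<in>Basis. emeasure std_normal (A b))"
      using A by (intro prod.cong refl) (simp add: std_normal_def emeasure_density)
    finally show "emeasure (density (PiM Basis (\<lambda>_::real^'d. lborel)) (\<lambda>f. \<Prod>b\<in>Basis. ennreal (std_normal_density (f b)))) (PiE Basis A)
      = (\<Prod>b\<in>Basis. emeasure std_normal (A b))" .
  qed
qed

lemma gauss_vec_eq:
  "(gauss_vec :: (real^'d) measure) = distr QN borel (\<lambda>f. \<Sum>b\<in>Basis. f b *\<^sub>R b)"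
proof -
  let ?T = "\<lambda>f. \<Sum>b\<in>(Basis::(real^'d) set). f b *\<^sub>R b"
  let ?g = "\<lambda>x::real^'d. ennreal (\<Prod>i\<in>UNIV. std_normal_density (x $ i))"
  have "(gauss_vec :: (real^'d) measure) = density (distr (PiM Basis (\<lambda>_. lborel)) borel ?T) ?g"
    unfolding gauss_vec_def by (subst lborel_eq) simp
  also have "\<dots> = distr (density (PiM Basis (\<lambda>_. lborel)) (\<lambda>f. ?g (?T f))) borel ?T"
    by (rule density_distr) auto
  also have "density (PiM Basis (\<lambda>_. lborel)) (\<lambda>f. ?g (?T f))
     = density (PiM Basis (\<lambda>_::real^'d. lborel)) (\<lambda>f. \<Prod>b\<in>Basis. ennreal (std_normal_density (f b)))"
  proof (intro density_cong AE_I2)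
    fix f :: "real^'d \<Rightarrow> real"
    have "?T f \<bullet> b = f b" if "b \<in> Basis" for b using that by simp
    then have "(\<Prod>b\<in>Basis. std_normal_density (?T f \<bullet> b)) = (\<Prod>b\<in>Basis. std_normal_density (f b))"
      by (intro prod.cong) auto
    then show "?g (?T f) = (\<Prod>b\<in>Basis. ennreal (std_normal_density (f b)))"
      by (simp only: gauss_density_Basis) (simp add: prod_ennreal)
  qed auto
  also have "\<dots> = QN" by (rule PiM_lborel_density)
  finally show ?thesis .
qed

lemma prob_space_QN: "prob_space (QN :: (real^'d \<Rightarrow> real) measure)"
  by (rule prob_space_PiM) (rule prob_space_std_normal)

lemma prob_space_gauss_vec: "prob_space (gauss_vec :: (real^'d) measure)"
  unfolding gauss_vec_eq by (rule prob_space.prob_space_distr[OF prob_space_QN]) measurable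

lemma sets_gauss_vec[simp, measurable_cong]: "sets gauss_vec = sets borel"
  by (simp add: gauss_vec_def)

lemma space_gauss_vec[simp]: "space gauss_vec = UNIV"
  by (simp add: gauss_vec_def)

lemma QN_coord_indep:
  "prob_space.indep_vars (QN :: (real^'d \<Rightarrow> real) measure) (\<lambda>_. borel) (\<lambda>b f. f b) Basis"
proof -
  interpret Q: prob_space "QN :: (real^'d \<Rightarrow> real) measure" by (rule prob_space_QN)
  have "distr QN (PiM Basis (\<lambda>_. borel)) (\<lambda>x. \<lambda>b\<in>Basis. x b) = distr QN QN (\<lambda>x. x)"
    by (intro distr_cong) (auto simp: space_PiM cong: sets_PiM_cong)
  also have "\<dots> = (QN :: (real^'d \<Rightarrow> real) measure)" by (rule distr_id2) simp
  also have "\<dots> = PiM Basis (\<lambda>b. distr QN borel (\<lambda>f. f b))"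
  proof (rule PiM_cong)
    fix b :: "real^'d" assume b: "b \<in> Basis"
    have "distr QN borel (\<lambda>f. f b) = distr QN std_normal (\<lambda>f. f b)"
      by (intro distr_cong) auto
    also have "\<dots> = std_normal"
      by (rule distr_PiM_component[OF prob_space_std_normal b])
    finally show "std_normal = distr QN borel (\<lambda>f. f b)" by simp
  qed simp
  finally show ?thesis
    by (subst Q.indep_vars_iff_distr_eq_PiM') (auto intro!: measurable_component_singleton)
qed

lemma QN_coord_distributed:
  assumes b: "(b :: real^'d) \<in> Basis"
  shows "distributed QN lborel (\<lambda>f. f b) std_normal_density"
proof -
  have "distr QN lborel (\<lambda>f. f b) = distr QN std_normal (\<lambda>f. f b)"
    by (intro distr_cong) auto
  also have "\<dots> = std_normal"
    by (rule distr_PiM_component[OF prob_space_std_normal b])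
  finally show ?thesis unfolding distributed_def using b
    by (auto simp: std_normal_def intro!: measurable_component_singleton)
qed

lemma gauss_inner_integral:
  fixes F :: "real \<Rightarrow> real" and \<beta> :: "real^'d"
  assumes [measurable]: "F \<in> borel_measurable borel"
  shows "integral\<^sup>L gauss_vec (\<lambda>t. F (t \<bullet> \<beta>)) = integral\<^sup>L std_normal (\<lambda>z. F (norm \<beta> * z))"
proof -
  interpret Q: prob_space "QN :: (real^'d \<Rightarrow> real) measure" by (rule prob_space_QN)
  interpret S: prob_space std_normal by (rule prob_space_std_normal)
  have inner_T: "(\<Sum>b\<in>Basis. f b *\<^sub>R b) \<bullet> \<beta> = (\<Sum>b\<in>Basis. (b \<bullet> \<beta>) * f b)" for f :: "real^'d \<Rightarrow> real"
    by (simp add: inner_sum_left mult.commute)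
  have "integral\<^sup>L gauss_vec (\<lambda>t. F (t \<bullet> \<beta>)) = integral\<^sup>L QN (\<lambda>f. F ((\<Sum>b\<in>Basis. f b *\<^sub>R b) \<bullet> \<beta>))"
    unfolding gauss_vec_eq by (subst integral_distr) auto
  also have "\<dots> = integral\<^sup>L QN (\<lambda>f. F (\<Sum>b\<in>Basis. (b \<bullet> \<beta>) * f b))"
    by (simp only: inner_T)
  finally have L: "integral\<^sup>L gauss_vec (\<lambda>t. F (t \<bullet> \<beta>)) = integral\<^sup>L QN (\<lambda>f. F (\<Sum>b\<in>Basis. (b \<bullet> \<beta>) * f b))" .
  show ?thesis
  proof (cases "\<beta> = 0")
    case True
    then show ?thesis unfolding L using S.prob_space by (simp add: Q.prob_space)
  next
    case False
    define J where "J = {b\<in>Basis. b \<bullet> \<beta> \<noteq> (0::real)}"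
    have J: "J \<noteq> {}" "finite J" "J \<subseteq> Basis"
      using False euclidean_all_zero_iff[of \<beta>] by (auto simp: J_def inner_commute)
    have sumJ: "(\<Sum>b\<in>Basis. (b \<bullet> \<beta>) * f b) = (\<Sum>b\<in>J. (b \<bullet> \<beta>) * f b)" for f :: "real^'d \<Rightarrow> real"
      by (rule sum.mono_neutral_cong_right) (auto simp: J_def)
    have ind: "Q.indep_vars (\<lambda>_. borel) (\<lambda>b f. 0 + (b \<bullet> \<beta>) * f b) J"
      by (rule Q.indep_vars_compose2[where X="\<lambda>b f. f b" and M'="\<lambda>_. borel"])
         (auto intro: Q.indep_vars_subset[OF QN_coord_indep J(3)])
    have dist: "distributed QN lborel (\<lambda>f. 0 + (b \<bullet> \<beta>) * f b) (normal_density 0 \<bar>b \<bullet> \<beta>\<bar>)" if "b \<in> J" for b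
      using Q.normal_density_affine[OF QN_coord_distributed[of b], of "b \<bullet> \<beta>" 0] that
      by (auto simp: J_def)
    have "distributed QN lborel (\<lambda>f. \<Sum>b\<in>J. 0 + (b \<bullet> \<beta>) * f b)
            (normal_density (\<Sum>b\<in>J. 0) (sqrt (\<Sum>b\<in>J. \<bar>b \<bullet> \<beta>\<bar>\<^sup>2)))"
      by (rule Q.sum_indep_normal[OF J(2) J(1) ind _ dist]) (auto simp: J_def)
    moreover have "sqrt (\<Sum>b\<in>J. \<bar>b \<bullet> \<beta>\<bar>\<^sup>2) = norm \<beta>"
    proof -
      have "(\<Sum>b\<in>J. \<bar>b \<bullet> \<beta>\<bar>\<^sup>2) = (\<Sum>b\<in>Basis. (\<beta> \<bullet> b) * (\<beta> \<bullet> b))"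
        by (rule sum.mono_neutral_cong_left) (auto simp: J_def inner_commute power2_eq_square)
      also have "\<dots> = \<beta> \<bullet> \<beta>" by (simp add: euclidean_inner[of \<beta> \<beta>])
      finally show ?thesis by (simp add: norm_eq_sqrt_inner)
    qed
    ultimately have D1: "distributed QN lborel (\<lambda>f. \<Sum>b\<in>J. (b \<bullet> \<beta>) * f b) (normal_density 0 (norm \<beta>))"
      by simp
    have D0: "distributed std_normal lborel (\<lambda>z. z) std_normal_density"
      unfolding distributed_def by (simp add: distr_id2) (simp add: std_normal_def)
    have D2: "distributed std_normal lborel (\<lambda>z. 0 + norm \<beta> * z) (normal_density (0 + norm \<beta> * 0) (\<bar>norm \<beta>\<bar> * 1))"
      by (rule S.normal_density_affine[OF D0]) (use False in auto)
    have "integral\<^sup>L QN (\<lambda>f. F (\<Sum>b\<in>J. (b \<bullet> \<beta>) * f b))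
        = integral\<^sup>L (distr QN lborel (\<lambda>f. \<Sum>b\<in>J. (b \<bullet> \<beta>) * f b)) F"
      using D1 by (subst integral_distr) (auto simp: distributed_def)
    also have "\<dots> = integral\<^sup>L (density lborel (normal_density 0 (norm \<beta>))) F"
      using D1 by (simp add: distributed_def)
    also have "\<dots> = integral\<^sup>L (distr std_normal lborel (\<lambda>z. 0 + norm \<beta> * z)) F"
      using D2 by (simp add: distributed_def)
    also have "\<dots> = integral\<^sup>L std_normal (\<lambda>z. F (norm \<beta> * z))"
      using D2 by (subst integral_distr) (auto simp: distributed_def)
    finally show ?thesis unfolding L by (simp only: sumJ)
  qed
qed

definition pK :: "real \<Rightarrow> real^'d \<Rightarrow> real^'d \<Rightarrow> ((real^'d) \<times> real) measure" where
  "pK \<beta>0 \<beta> x = distr (measure_pmf (bernoulli_pmf (Phi (\<beta>0 + x \<bullet> \<beta>)))) borel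
                (\<lambda>b. (x, if b then 1 else -1))"

definition psi :: "real \<Rightarrow> real^'d \<Rightarrow> ((real^'d) \<times> real \<Rightarrow> ennreal) \<Rightarrow> real^'d \<Rightarrow> ennreal" where
  "psi \<beta>0 \<beta> g t = g (t, 1) * ennreal (Phi (\<beta>0 + t \<bullet> \<beta>)) + g (t, -1) * ennreal (1 - Phi (\<beta>0 + t \<bullet> \<beta>))"

lemma probit_pair_pK: "probit_pair \<beta>0 \<beta> = bind gauss_vec (pK \<beta>0 \<beta>)"
  unfolding probit_pair_def pK_def[abs_def] ..

lemma sets_pK[simp]: "sets (pK \<beta>0 \<beta> x) = sets borel"
  by (simp add: pK_def)

lemma prob_space_pK: "prob_space (pK \<beta>0 \<beta> x)"
  unfolding pK_def by (intro prob_space.prob_space_distr prob_space_measure_pmf) auto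

lemma nn_integral_pK:
  assumes "g \<in> borel_measurable borel"
  shows "(\<integral>\<^sup>+y. g y \<partial>pK \<beta>0 \<beta> x) = psi \<beta>0 \<beta> g x"
proof -
  have "(\<integral>\<^sup>+y. g y \<partial>pK \<beta>0 \<beta> x) = (\<integral>\<^sup>+b. g (x, if b then 1 else -1) \<partial>measure_pmf (bernoulli_pmf (Phi (\<beta>0 + x \<bullet> \<beta>))))"
    unfolding pK_def using assms by (subst nn_integral_distr) auto
  also have "\<dots> = psi \<beta>0 \<beta> g x"
    using Phi_nonneg Phi_le_1 by (subst nn_integral_bernoulli_pmf) (auto simp: psi_def)
  finally show ?thesis .
qed

lemma psi_measurable[measurable]:
  assumes [measurable]: "g \<in> borel_measurable borel"
  shows "psi \<beta>0 \<beta> g \<in> borel_measurable borel"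
  unfolding psi_def[abs_def] by measurable

lemma pK_measurable: fixes \<beta> :: "real^'d" shows "pK \<beta>0 \<beta> \<in> measurable gauss_vec (subprob_algebra borel)"
proof (rule measurable_subprob_algebra)
  fix x show "subprob_space (pK \<beta>0 \<beta> x)"
    using prob_space_pK prob_space_imp_subprob_space by blast
next
  fix x show "sets (pK \<beta>0 \<beta> x) = sets borel" by simp
next
  fix A :: "((real^'d) \<times> real) set" assume A[measurable]: "A \<in> sets borel"
  have "emeasure (pK \<beta>0 \<beta> x) A = psi \<beta>0 \<beta> (indicator A) x" for x
    by (subst nn_integral_pK[symmetric]) (auto simp: nn_integral_indicator)
  moreover have "psi \<beta>0 \<beta> (indicator A) \<in> borel_measurable gauss_vec"
    using psi_measurable[of "indicator A" \<beta>0 \<beta>] by (simp cong: measurable_cong_sets)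
  ultimately show "(\<lambda>x. emeasure (pK \<beta>0 \<beta> x) A) \<in> borel_measurable gauss_vec" by simp
qed

lemma sets_probit_pair[simp, measurable_cong]: "sets (probit_pair \<beta>0 \<beta>) = sets borel"
  unfolding probit_pair_pK by (subst sets_bind) auto

lemma space_probit_pair[simp]: "space (probit_pair \<beta>0 \<beta>) = UNIV"
  using sets_eq_imp_space_eq[OF sets_probit_pair] by simp

lemma prob_space_probit_pair: "prob_space (probit_pair \<beta>0 \<beta>)"
  unfolding probit_pair_pK
  by (rule prob_space.prob_space_bind[OF prob_space_gauss_vec _ pK_measurable]) (simp add: prob_space_pK)

lemma nn_integral_probit_pair:
  assumes "g \<in> borel_measurable borel"
  shows "(\<integral>\<^sup>+y. g y \<partial>probit_pair \<beta>0 \<beta>) = (\<integral>\<^sup>+t. psi \<beta>0 \<beta> g t \<partial>gauss_vec)"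
  unfolding probit_pair_pK
  by (subst nn_integral_bind[OF assms pK_measurable]) (simp add: nn_integral_pK[OF assms])

lemma kernel_PiM:
  fixes f :: "(nat \<Rightarrow> real^'d) \<Rightarrow> ennreal" and \<phi> :: "nat \<Rightarrow> (real^'d) \<times> real \<Rightarrow> ennreal"
    and \<beta> :: "real^'d"
  assumes "finite I" "f \<in> borel_measurable (PiM I (\<lambda>_. gauss_vec))"
    and \<phi>[measurable]: "\<And>i. \<phi> i \<in> borel_measurable borel"
  shows "(\<integral>\<^sup>+\<omega>. f (\<lambda>i\<in>I. fst (\<omega> i)) * (\<Prod>i\<in>I. \<phi> i (\<omega> i)) \<partial>PiM I (\<lambda>_. probit_pair \<beta>0 \<beta>))
       = (\<integral>\<^sup>+x. f x * (\<Prod>i\<in>I. psi \<beta>0 \<beta> (\<phi> i) (x i)) \<partial>PiM I (\<lambda>_. gauss_vec))"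
  using assms(1,2)
proof (induction I arbitrary: f rule: finite_induct)
  case empty
  then show ?case by (simp add: PiM_empty nn_integral_count_space_finite)
next
  case (insert i I)
  note f_meas[measurable] = insert.prems
  interpret PP: product_sigma_finite "\<lambda>_::nat. probit_pair \<beta>0 \<beta>"
    unfolding product_sigma_finite_def
    using prob_space_imp_sigma_finite[OF prob_space_probit_pair] by blast
  interpret PG: product_sigma_finite "\<lambda>_::nat. gauss_vec :: (real^'d) measure"
    unfolding product_sigma_finite_def
    using prob_space_imp_sigma_finite[OF prob_space_gauss_vec] by blast
  have G_sf: "sigma_finite_measure (gauss_vec :: (real^'d) measure)"
    using prob_space_imp_sigma_finite[OF prob_space_gauss_vec] by blast
  define f' where "f' x = (\<integral>\<^sup>+t. f (x(i := t)) * psi \<beta>0 \<beta> (\<phi> i) t \<partial>gauss_vec)" for x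
  have fst_meas: "(\<lambda>\<omega>. fst (\<omega> j)) \<in> measurable (PiM J (\<lambda>_. probit_pair \<beta>0 \<beta>)) gauss_vec"
    if "j \<in> J" for j J
  proof -
    have "(\<lambda>\<omega>. \<omega> j) \<in> measurable (PiM J (\<lambda>_. probit_pair \<beta>0 \<beta>)) borel"
      using that by (simp cong: measurable_cong_sets)
    moreover have "fst \<in> measurable (borel :: ((real^'d) \<times> real) measure) gauss_vec"
      by (simp add: borel_prod[symmetric] cong: measurable_cong_sets)
    ultimately show ?thesis by (rule measurable_compose)
  qed
  have restr_meas: "(\<lambda>\<omega>. \<lambda>j\<in>J. fst (\<omega> j)) \<in> measurable (PiM J (\<lambda>_. probit_pair \<beta>0 \<beta>)) (PiM J (\<lambda>_. gauss_vec))" for J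
    by (rule measurable_restrict) (rule fst_meas)
  have f'_meas[measurable]: "f' \<in> borel_measurable (PiM I (\<lambda>_. gauss_vec))"
  proof -
    have "(\<lambda>(x, t). f (x(i := t)) * psi \<beta>0 \<beta> (\<phi> i) t) \<in> borel_measurable (PiM I (\<lambda>_. gauss_vec) \<Otimes>\<^sub>M gauss_vec)"
    proof -
      have "(\<lambda>p. (fst p)(i := snd p)) \<in> measurable (PiM I (\<lambda>_. gauss_vec) \<Otimes>\<^sub>M gauss_vec) (PiM (insert i I) (\<lambda>_. gauss_vec))"
        by (rule measurable_fun_upd[where J=I]) auto
      moreover have "(\<lambda>p. psi \<beta>0 \<beta> (\<phi> i) (snd p)) \<in> borel_measurable (PiM I (\<lambda>_. gauss_vec) \<Otimes>\<^sub>M gauss_vec)"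
        by (rule measurable_compose[OF measurable_snd]) (simp cong: measurable_cong_sets)
      ultimately show ?thesis unfolding case_prod_beta
        by (intro borel_measurable_times_ennreal measurable_compose[OF _ f_meas])
    qed
    then show ?thesis unfolding f'_def[abs_def] by (rule sigma_finite_measure.borel_measurable_nn_integral[OF G_sf])
  qed
  have LHS_meas: "(\<lambda>\<omega>. f (\<lambda>j\<in>insert i I. fst (\<omega> j)) * (\<Prod>j\<in>insert i I. \<phi> j (\<omega> j)))
      \<in> borel_measurable (PiM (insert i I) (\<lambda>_. probit_pair \<beta>0 \<beta>))"
  proof (intro borel_measurable_times_ennreal borel_measurable_prod_ennreal)
    show "(\<lambda>\<omega>. f (\<lambda>j\<in>insert i I. fst (\<omega> j))) \<in> borel_measurable (PiM (insert i I) (\<lambda>_. probit_pair \<beta>0 \<beta>))"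
      by (rule measurable_compose[OF restr_meas f_meas])
    fix j assume "j \<in> insert i I"
    then have "(\<lambda>\<omega>. \<omega> j) \<in> measurable (PiM (insert i I) (\<lambda>_. probit_pair \<beta>0 \<beta>)) borel"
      by (simp cong: measurable_cong_sets)
    then show "(\<lambda>\<omega>. \<phi> j (\<omega> j)) \<in> borel_measurable (PiM (insert i I) (\<lambda>_. probit_pair \<beta>0 \<beta>))"
      by (rule measurable_compose) (rule \<phi>)
  qed
  have "(\<integral>\<^sup>+\<omega>. f (\<lambda>j\<in>insert i I. fst (\<omega> j)) * (\<Prod>j\<in>insert i I. \<phi> j (\<omega> j)) \<partial>PiM (insert i I) (\<lambda>_. probit_pair \<beta>0 \<beta>))
      = (\<integral>\<^sup>+\<omega>. \<integral>\<^sup>+y. f (\<lambda>j\<in>insert i I. fst ((fun_upd \<omega> i y) j)) * (\<Prod>j\<in>insert i I. \<phi> j ((fun_upd \<omega> i y) j))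
           \<partial>probit_pair \<beta>0 \<beta> \<partial>PiM I (\<lambda>_. probit_pair \<beta>0 \<beta>))"
    by (rule PP.product_nn_integral_insert[OF insert.hyps LHS_meas])
  also have "\<dots> = (\<integral>\<^sup>+\<omega>. f' (\<lambda>j\<in>I. fst (\<omega> j)) * (\<Prod>j\<in>I. \<phi> j (\<omega> j)) \<partial>PiM I (\<lambda>_. probit_pair \<beta>0 \<beta>))"
  proof (rule nn_integral_cong)
    fix \<omega> assume \<omega>: "\<omega> \<in> space (PiM I (\<lambda>_. probit_pair \<beta>0 \<beta>))"
    define x where "x = (\<lambda>j\<in>I. fst (\<omega> j))"
    define C where "C = (\<Prod>j\<in>I. \<phi> j (\<omega> j))"
    have eq: "f (\<lambda>j\<in>insert i I. fst ((fun_upd \<omega> i y) j)) * (\<Prod>j\<in>insert i I. \<phi> j ((fun_upd \<omega> i y) j))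
        = C * (f (x(i := fst y)) * \<phi> i y)" for y
    proof -
      have "(\<lambda>j\<in>insert i I. fst ((fun_upd \<omega> i y) j)) = x(i := fst y)"
        by (auto simp: x_def fun_eq_iff)
      moreover have "(\<Prod>j\<in>insert i I. \<phi> j ((fun_upd \<omega> i y) j)) = \<phi> i y * C"
      proof -
        have "(\<Prod>j\<in>I. \<phi> j ((fun_upd \<omega> i y) j)) = C"
          unfolding C_def using insert.hyps by (intro prod.cong) auto
        then show ?thesis using insert.hyps by simp
      qed
      ultimately show ?thesis by (simp add: mult_ac)
    qed
    have meas_inner: "(\<lambda>y. f (x(i := fst y)) * \<phi> i y) \<in> borel_measurable borel"
    proof -
      have "x \<in> space (PiM I (\<lambda>_. gauss_vec))" by (auto simp: x_def space_PiM)
      then have "(\<lambda>t. x(i := t)) \<in> measurable gauss_vec (PiM (insert i I) (\<lambda>_. gauss_vec))"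
        by (rule measurable_component_update) (use insert.hyps in auto)
      then have "(\<lambda>t. f (x(i := t))) \<in> borel_measurable borel"
        using measurable_compose[OF _ f_meas] by (simp cong: measurable_cong_sets)
      moreover have "fst \<in> measurable (borel :: ((real^'d) \<times> real) measure) borel"
        by (simp add: borel_prod[symmetric])
      ultimately have "(\<lambda>y. f (x(i := fst y))) \<in> borel_measurable (borel :: ((real^'d) \<times> real) measure)"
        using measurable_compose by blast
      then show ?thesis by (intro borel_measurable_times_ennreal \<phi>)
    qed
    have "(\<integral>\<^sup>+y. C * (f (x(i := fst y)) * \<phi> i y) \<partial>probit_pair \<beta>0 \<beta>)
        = C * (\<integral>\<^sup>+y. f (x(i := fst y)) * \<phi> i y \<partial>probit_pair \<beta>0 \<beta>)"
      using meas_inner by (subst nn_integral_cmult) (auto cong: measurable_cong_sets)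
    also have "(\<integral>\<^sup>+y. f (x(i := fst y)) * \<phi> i y \<partial>probit_pair \<beta>0 \<beta>)
        = (\<integral>\<^sup>+t. psi \<beta>0 \<beta> (\<lambda>y. f (x(i := fst y)) * \<phi> i y) t \<partial>gauss_vec)"
      by (rule nn_integral_probit_pair[OF meas_inner])
    also have "\<dots> = f' x"
      unfolding f'_def psi_def by (intro nn_integral_cong) (simp add: algebra_simps)
    finally have R: "(\<integral>\<^sup>+y. C * (f (x(i := fst y)) * \<phi> i y) \<partial>probit_pair \<beta>0 \<beta>) = C * f' x" .
    show "(\<integral>\<^sup>+y. f (\<lambda>j\<in>insert i I. fst ((fun_upd \<omega> i y) j)) * (\<Prod>j\<in>insert i I. \<phi> j ((fun_upd \<omega> i y) j)) \<partial>probit_pair \<beta>0 \<beta>)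
        = f' (\<lambda>j\<in>I. fst (\<omega> j)) * (\<Prod>j\<in>I. \<phi> j (\<omega> j))"
      unfolding eq R by (simp only: x_def C_def mult.commute)
  qed
  also have "\<dots> = (\<integral>\<^sup>+x. f' x * (\<Prod>j\<in>I. psi \<beta>0 \<beta> (\<phi> j) (x j)) \<partial>PiM I (\<lambda>_. gauss_vec))"
    by (rule insert.IH[OF f'_meas])
  also have "\<dots> = (\<integral>\<^sup>+x. \<integral>\<^sup>+t. f (x(i := t)) * (\<Prod>j\<in>insert i I. psi \<beta>0 \<beta> (\<phi> j) ((x(i := t)) j)) \<partial>gauss_vec \<partial>PiM I (\<lambda>_. gauss_vec))"
  proof (rule nn_integral_cong)
    fix x assume x: "x \<in> space (PiM I (\<lambda>_. gauss_vec :: (real^'d) measure))"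
    have meas: "(\<lambda>t. f (x(i := t)) * psi \<beta>0 \<beta> (\<phi> i) t) \<in> borel_measurable gauss_vec"
    proof -
      have "(\<lambda>t. x(i := t)) \<in> measurable gauss_vec (PiM (insert i I) (\<lambda>_. gauss_vec))"
        by (rule measurable_component_update[OF x]) (use insert.hyps in auto)
      then have "(\<lambda>t. f (x(i := t))) \<in> borel_measurable gauss_vec"
        using measurable_compose[OF _ f_meas] by simp
      moreover have "psi \<beta>0 \<beta> (\<phi> i) \<in> borel_measurable gauss_vec"
        by (simp cong: measurable_cong_sets)
      ultimately show ?thesis by (rule borel_measurable_times_ennreal)
    qed
    have "(\<Prod>j\<in>insert i I. psi \<beta>0 \<beta> (\<phi> j) ((x(i := t)) j)) = psi \<beta>0 \<beta> (\<phi> i) t * (\<Prod>j\<in>I. psi \<beta>0 \<beta> (\<phi> j) (x j))" for t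
    proof -
      have "(\<Prod>j\<in>I. psi \<beta>0 \<beta> (\<phi> j) ((x(i := t)) j)) = (\<Prod>j\<in>I. psi \<beta>0 \<beta> (\<phi> j) (x j))"
        using insert.hyps by (intro prod.cong) auto
      then show ?thesis using insert.hyps by simp
    qed
    then have "(\<integral>\<^sup>+t. f (x(i := t)) * (\<Prod>j\<in>insert i I. psi \<beta>0 \<beta> (\<phi> j) ((x(i := t)) j)) \<partial>gauss_vec)
        = (\<integral>\<^sup>+t. (f (x(i := t)) * psi \<beta>0 \<beta> (\<phi> i) t) * (\<Prod>j\<in>I. psi \<beta>0 \<beta> (\<phi> j) (x j)) \<partial>gauss_vec)"
      by (simp add: mult_ac)
    also have "\<dots> = f' x * (\<Prod>j\<in>I. psi \<beta>0 \<beta> (\<phi> j) (x j))"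
      unfolding f'_def by (rule nn_integral_multc[OF meas])
    finally show "f' x * (\<Prod>j\<in>I. psi \<beta>0 \<beta> (\<phi> j) (x j))
        = (\<integral>\<^sup>+t. f (x(i := t)) * (\<Prod>j\<in>insert i I. psi \<beta>0 \<beta> (\<phi> j) ((x(i := t)) j)) \<partial>gauss_vec)" by simp
  qed
  also have "\<dots> = (\<integral>\<^sup>+x. f x * (\<Prod>j\<in>insert i I. psi \<beta>0 \<beta> (\<phi> j) (x j)) \<partial>PiM (insert i I) (\<lambda>_. gauss_vec))"
  proof (rule PG.product_nn_integral_insert[OF insert.hyps, symmetric])
    show "(\<lambda>x. f x * (\<Prod>j\<in>insert i I. psi \<beta>0 \<beta> (\<phi> j) (x j))) \<in> borel_measurable (PiM (insert i I) (\<lambda>_. gauss_vec))"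
    proof (intro borel_measurable_times_ennreal borel_measurable_prod_ennreal f_meas)
      fix j assume "j \<in> insert i I"
      then have "(\<lambda>x. x j) \<in> measurable (PiM (insert i I) (\<lambda>_. gauss_vec :: (real^'d) measure)) borel"
        by (simp cong: measurable_cong_sets)
      then show "(\<lambda>x. psi \<beta>0 \<beta> (\<phi> j) (x j)) \<in> borel_measurable (PiM (insert i I) (\<lambda>_. gauss_vec))"
        by (rule measurable_compose) simp
    qed
  qed
  finally show ?case .
qed

lemma hoeff_step:
  fixes h l :: real
  assumes "0 \<le> h" "h \<le> 1" "0 \<le> l"
  shows "1 - (1 - exp (- l)) * h \<le> exp (l\<^sup>2 / 8 - l * h)"
proof -
  have A: "- l * (1 - h) + ln (1 + (1 - h) * (exp l - 1)) \<le> l\<^sup>2 / 8"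
    using Hoeffdings_lemma_aux[of l "1 - h"] assms by simp
  have pos: "0 < 1 + (1 - h) * (exp l - 1)"
    using assms by (intro add_pos_nonneg) auto
  have "1 + (1 - h) * (exp l - 1) \<le> exp (l\<^sup>2 / 8 + l * (1 - h))"
  proof -
    have "ln (1 + (1 - h) * (exp l - 1)) \<le> l\<^sup>2 / 8 + l * (1 - h)" using A by simp
    then show ?thesis using pos by (subst ln_le_cancel_iff[symmetric]) auto
  qed
  then have "exp (- l) * (1 + (1 - h) * (exp l - 1)) \<le> exp (- l) * exp (l\<^sup>2 / 8 + l * (1 - h))"
    by (intro mult_left_mono) auto
  moreover have "exp (- l) * (1 + (1 - h) * (exp l - 1)) = 1 - (1 - exp (- l)) * h"
    by (simp add: algebra_simps exp_minus field_simps)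
  moreover have "exp (- l) * exp (l\<^sup>2 / 8 + l * (1 - h)) = exp (l\<^sup>2 / 8 - l * h)"
    by (simp add: exp_add[symmetric] algebra_simps)
  ultimately show ?thesis by simp
qed

lemma numeric_bound:
  fixes h \<epsilon> \<delta> N :: real and n :: nat
  assumes "0 \<le> h" "h \<le> 1" "0 < \<epsilon>" "0 \<le> \<delta>" "0 \<le> N" "N \<le> exp (2 * real n * \<delta>\<^sup>2)"
  defines "l \<equiv> 4 * (\<epsilon> + \<delta>)"
  shows "exp (l * (real n * (h - \<epsilon> - \<delta>))) * N * (1 - (1 - exp (- l)) * h) ^ n \<le> exp (- 2 * \<epsilon>\<^sup>2 * real n)"
proof -
  have l: "0 \<le> l" using assms by (simp add: l_def)
  have b0: "0 \<le> 1 - (1 - exp (- l)) * h"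
  proof -
    have "(1 - exp (- l)) * h \<le> 1 * 1" using assms l by (intro mult_mono) auto
    then show ?thesis by simp
  qed
  have "(1 - (1 - exp (- l)) * h) ^ n \<le> exp (l\<^sup>2 / 8 - l * h) ^ n"
    by (intro power_mono hoeff_step b0) (use assms l in auto)
  also have "\<dots> = exp (real n * (l\<^sup>2 / 8 - l * h))" by (simp add: exp_of_nat_mult)
  finally have P: "(1 - (1 - exp (- l)) * h) ^ n \<le> exp (real n * (l\<^sup>2 / 8 - l * h))" .
  have "exp (l * (real n * (h - \<epsilon> - \<delta>))) * N * (1 - (1 - exp (- l)) * h) ^ n
      \<le> exp (l * (real n * (h - \<epsilon> - \<delta>))) * exp (2 * real n * \<delta>\<^sup>2) * exp (real n * (l\<^sup>2 / 8 - l * h))"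
    using assms P b0 by (intro mult_mono) auto
  also have "\<dots> = exp (l * (real n * (h - \<epsilon> - \<delta>)) + 2 * real n * \<delta>\<^sup>2 + real n * (l\<^sup>2 / 8 - l * h))"
    by (simp add: exp_add)
  also have "l * (real n * (h - \<epsilon> - \<delta>)) + 2 * real n * \<delta>\<^sup>2 + real n * (l\<^sup>2 / 8 - l * h)
      = - 2 * \<epsilon>\<^sup>2 * real n - real n * (4 * \<epsilon> * \<delta>)"
    by (simp add: l_def power2_eq_square algebra_simps)
  also have "\<dots> \<le> - 2 * \<epsilon>\<^sup>2 * real n"
    using assms by (simp add: mult_nonneg_nonneg)
  finally show ?thesis by simp
qed

lemma Nb_bound:
  fixes n D :: nat
  assumes "1 \<le> D" "D \<le> n"
  defines "\<delta> \<equiv> sqrt (2 * ln (exp 1 * real n / real D) / (real n / real D))"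
  shows "(exp 1 * real n / real D) ^ D \<le> exp (2 * real n * \<delta>\<^sup>2)" "0 \<le> \<delta>"
proof -
  define L where "L = ln (exp 1 * real n / real D)"
  have nD: "1 \<le> real n / real D" using assms by auto
  have pos: "0 < exp 1 * real n / real D" using assms by auto
  have L1: "1 \<le> L"
  proof -
    have "exp 1 * 1 \<le> exp 1 * (real n / real D)" using nD by (intro mult_left_mono) auto
    then have "exp 1 \<le> exp 1 * real n / real D" by (metis mult.right_neutral times_divide_eq_right)
    then show ?thesis unfolding L_def using pos by (subst ln_ge_iff) auto
  qed
  have d2: "\<delta>\<^sup>2 = 2 * L / (real n / real D)"
    unfolding \<delta>_def L_def[symmetric] using L1 nD by simp
  have "(exp 1 * real n / real D) ^ D = exp (real D * L)"
    unfolding L_def using pos by (subst exp_of_nat_mult) simp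
  also have "\<dots> \<le> exp (2 * real n * \<delta>\<^sup>2)"
  proof -
    have e: "2 * real n * \<delta>\<^sup>2 = 4 * real D * L"
      unfolding d2 using assms by (simp add: field_simps)
    have "real D * L \<le> 4 * real D * L" using L1 by simp
    then show ?thesis unfolding e by simp
  qed
  finally show "(exp 1 * real n / real D) ^ D \<le> exp (2 * real n * \<delta>\<^sup>2)" .
  show "0 \<le> \<delta>" using L1 nD unfolding \<delta>_def L_def[symmetric]
    by (intro real_sqrt_ge_zero divide_nonneg_nonneg) auto
qed

definition phiS :: "real \<Rightarrow> nat set \<Rightarrow> nat \<Rightarrow> (real^'d) \<times> real \<Rightarrow> ennreal" where
  "phiS l S i p = ennreal (exp (- l * (if (i \<in> S \<and> snd p \<le> 0) \<or> (i \<notin> S \<and> 0 \<le> snd p) then 1 else 0)))"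

lemma phiS_measurable[measurable]: "phiS l S i \<in> borel_measurable borel"
proof -
  have "snd \<in> measurable (borel :: ((real^'d) \<times> real) measure) borel"
    by (simp add: borel_prod[symmetric])
  then have [measurable]: "(\<lambda>p::(real^'d) \<times> real. snd p) \<in> borel_measurable borel" by simp
  show ?thesis unfolding phiS_def[abs_def] by measurable
qed

lemma psi_phiS_bound:
  fixes \<beta> :: "real^'d"
  assumes "0 \<le> l"
  shows "psi \<beta>0 \<beta> (phiS l S i) t \<le> ennreal (1 - (1 - exp (- l)) * Phi (- \<bar>\<beta>0 + t \<bullet> \<beta>\<bar>))"
proof -
  define p where "p = Phi (\<beta>0 + t \<bullet> \<beta>)"
  define q where "q = Phi (- \<bar>\<beta>0 + t \<bullet> \<beta>\<bar>)"
  have p: "0 \<le> p" "p \<le> 1" by (auto simp: p_def Phi_nonneg Phi_le_1)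
  have q: "q \<le> p" "q \<le> 1 - p" using Phi_abs_le by (auto simp: p_def q_def)
  have e: "0 < exp (- l)" "exp (- l) \<le> 1" using assms by auto
  show ?thesis
  proof (cases "i \<in> S")
    case True
    then have "psi \<beta>0 \<beta> (phiS l S i) t = 1 * ennreal p + ennreal (exp (- l)) * ennreal (1 - p)"
      by (simp add: psi_def phiS_def p_def)
    also have "\<dots> = ennreal (p + exp (- l) * (1 - p))"
      using p e by (simp add: ennreal_mult[symmetric] ennreal_plus[symmetric] del: ennreal_plus)
    also have "\<dots> \<le> ennreal (1 - (1 - exp (- l)) * q)"
    proof (rule ennreal_leI)
      have "(1 - exp (- l)) * q \<le> (1 - exp (- l)) * (1 - p)" using q e by (intro mult_left_mono) auto
      then show "p + exp (- l) * (1 - p) \<le> 1 - (1 - exp (- l)) * q" by (simp add: algebra_simps)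
    qed
    finally show ?thesis by (simp add: q_def)
  next
    case False
    then have "psi \<beta>0 \<beta> (phiS l S i) t = ennreal (exp (- l)) * ennreal p + 1 * ennreal (1 - p)"
      by (simp add: psi_def phiS_def p_def)
    also have "\<dots> = ennreal (exp (- l) * p + (1 - p))"
      using p e by (simp add: ennreal_mult[symmetric] ennreal_plus[symmetric] del: ennreal_plus)
    also have "\<dots> \<le> ennreal (1 - (1 - exp (- l)) * q)"
    proof (rule ennreal_leI)
      have "(1 - exp (- l)) * q \<le> (1 - exp (- l)) * p" using q e by (intro mult_left_mono) auto
      then show "exp (- l) * p + (1 - p) \<le> 1 - (1 - exp (- l)) * q" by (simp add: algebra_simps)
    qed
    finally show ?thesis by (simp add: q_def)
  qed
qed

lemma count_patterns:
  fixes x :: "nat \<Rightarrow> real^'d" and Dn :: "(real \<times> (real^'d)) set"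
  assumes "CARD('d) + 1 \<le> n"
  shows "real (card {S \<in> Pow {..<n}. \<exists>d\<in>Dn. {i\<in>{..<n}. 0 < (1, x i) \<bullet> d} = S})
         \<le> (exp 1 * real n / real (CARD('d) + 1)) ^ (CARD('d) + 1)"
proof -
  let ?a = "\<lambda>i. (1::real, x i)"
  let ?F = "{{i\<in>{..<n}. ?a i \<bullet> u > 0} | u. True}"
  have DIM: "DIM(real \<times> (real^'d)) = CARD('d) + 1" by simp
  have sub: "{S \<in> Pow {..<n}. \<exists>d\<in>Dn. {i\<in>{..<n}. 0 < (1, x i) \<bullet> d} = S} \<subseteq> ?F" by blast
  have fin: "finite ?F" by (rule finite_subset[of _ "Pow {..<n}"]) auto
  have "card {S \<in> Pow {..<n}. \<exists>d\<in>Dn. {i\<in>{..<n}. 0 < (1, x i) \<bullet> d} = S} \<le> card ?F"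
    by (rule card_mono[OF fin sub])
  then have "real (card {S \<in> Pow {..<n}. \<exists>d\<in>Dn. {i\<in>{..<n}. 0 < (1, x i) \<bullet> d} = S}) \<le> real (card ?F)"
    by simp
  also have "\<dots> \<le> (exp 1 * real n / real DIM(real \<times> (real^'d))) ^ DIM(real \<times> (real^'d))"
    by (rule pattern_count) (use assms in simp)
  finally show ?thesis unfolding DIM .
qed

theorem theorem2p5:
  fixes n :: nat and \<beta>0 :: real and \<beta> :: "real^'d" and \<epsilon> :: real
  assumes "n > CARD('d)" and "\<epsilon> > 0"
  defines "h \<equiv> integral\<^sup>L std_normal (\<lambda>z. Phi (- \<bar>\<beta>0 + norm \<beta> * z\<bar>))"
  shows "\<exists>A\<in>sets (probit_sample n \<beta>0 \<beta>).
           A \<subseteq> {\<omega>\<in>space (probit_sample n \<beta>0 \<beta>).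
                  sstar n \<omega> \<ge> real n * (h - \<epsilon> -
                     sqrt (2 * ln (exp 1 * real n / real (CARD('d) + 1)) / (real n / real (CARD('d) + 1))))}
         \<and> measure (probit_sample n \<beta>0 \<beta>) A \<ge> 1 - exp (- 2 * \<epsilon>\<^sup>2 * real n)"
proof -
  define D where "D = CARD('d) + 1"
  define \<delta> where "\<delta> = sqrt (2 * ln (exp 1 * real n / real D) / (real n / real D))"
  define \<theta> where "\<theta> = h - \<epsilon> - \<delta>"
  define l where "l = 4 * (\<epsilon> + \<delta>)"
  define Nb where "Nb = (exp 1 * real n / real D) ^ D"
  define P where "P = probit_pair \<beta>0 \<beta>"
  define \<Omega> where "\<Omega> = probit_sample n \<beta>0 \<beta>"
  define G where "G = (gauss_vec :: (real^'d) measure)"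
  have D: "1 \<le> D" "D \<le> n" using assms(1) by (auto simp: D_def)
  have \<delta>: "0 \<le> \<delta>" "Nb \<le> exp (2 * real n * \<delta>\<^sup>2)"
    using Nb_bound[OF D] by (auto simp: \<delta>_def Nb_def)
  have l: "0 \<le> l" using \<delta> assms(2) by (simp add: l_def)
  have \<Omega>_def': "\<Omega> = PiM {..<n} (\<lambda>_. P)" by (simp add: \<Omega>_def P_def probit_sample_def)
  interpret \<Omega>: prob_space \<Omega>
    unfolding \<Omega>_def' P_def by (intro prob_space_PiM prob_space_probit_pair)
  obtain Dn :: "(real \<times> (real^'d)) set" where Dn: "countable Dn"
    "\<And>X. open X \<Longrightarrow> X \<noteq> {} \<Longrightarrow> \<exists>d\<in>Dn. d \<in> X"
    using countable_dense_setE by blast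
  define IS where "IS S x = (if \<exists>d\<in>Dn. {i\<in>{..<n}. 0 < (1, x i) \<bullet> d} = S then 1 else 0 :: ennreal)"
    for S :: "nat set" and x :: "nat \<Rightarrow> real^'d"
  define F where "F \<omega> = (\<Sum>S\<in>Pow {..<n}. ennreal (exp (l * (real n * \<theta>))) *
      (IS S (\<lambda>i\<in>{..<n}. fst (\<omega> i)) * (\<Prod>i\<in>{..<n}. phiS l S i (\<omega> i))))" for \<omega>
  have IS_meas[measurable]: "IS S \<in> borel_measurable (PiM {..<n} (\<lambda>_. G))" for S
  proof -
    let ?M = "PiM {..<n} (\<lambda>_. G)"
    have pd: "{x\<in>space ?M. {i\<in>{..<n}. 0 < (1, x i) \<bullet> d} = S} \<in> sets ?M" for d :: "real \<times> (real^'d)"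
    proof (cases "S \<subseteq> {..<n}")
      case True
      have "{x\<in>space ?M. {i\<in>{..<n}. 0 < (1, x i) \<bullet> d} = S} = {x\<in>space ?M. \<forall>i\<in>{..<n}. (0 < (1, x i) \<bullet> d \<longleftrightarrow> i \<in> S)}"
        using True by auto
      also have "\<dots> \<in> sets ?M"
      proof (rule sets.sets_Collect_finite_All)
        fix i assume i: "i \<in> {..<n}"
        have c: "(\<lambda>t::real^'d. (1::real, t) \<bullet> d) \<in> borel_measurable G"
          unfolding G_def by (simp cong: measurable_cong_sets)
        have [measurable]: "(\<lambda>x. (1::real, x i) \<bullet> d) \<in> borel_measurable ?M"
          by (rule measurable_compose[OF measurable_component_singleton[OF i] c])
        show "{x\<in>space ?M. (0 < (1, x i) \<bullet> d \<longleftrightarrow> i \<in> S)} \<in> sets ?M" by measurable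
      qed simp
      finally show ?thesis .
    next
      case False
      then have "{x\<in>space ?M. {i\<in>{..<n}. 0 < (1, x i) \<bullet> d} = S} = {}" by auto
      then show ?thesis by (simp only: sets.empty_sets)
    qed
    have "{x\<in>space ?M. \<exists>d\<in>Dn. {i\<in>{..<n}. 0 < (1, x i) \<bullet> d} = S} \<in> sets ?M"
      by (rule sets.sets_Collect_countable_Ex'[OF pd Dn(1)])
    then show ?thesis unfolding IS_def[abs_def] by (intro measurable_If) auto
  qed
  have comp_meas: "(\<lambda>\<omega>. \<omega> i) \<in> measurable \<Omega> borel" if "i \<in> {..<n}" for i
    using that unfolding \<Omega>_def' P_def by (simp cong: measurable_cong_sets)
  have fst_meas: "fst \<in> measurable (borel :: ((real^'d) \<times> real) measure) G"
    by (simp add: G_def borel_prod[symmetric] cong: measurable_cong_sets)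
  have restr_meas: "(\<lambda>\<omega>. \<lambda>i\<in>{..<n}. fst (\<omega> i)) \<in> measurable \<Omega> (PiM {..<n} (\<lambda>_. G))"
    by (rule measurable_restrict) (rule measurable_compose[OF comp_meas fst_meas])
  have term_meas: "(\<lambda>\<omega>. IS S (\<lambda>i\<in>{..<n}. fst (\<omega> i)) * (\<Prod>i\<in>{..<n}. phiS l S i (\<omega> i))) \<in> borel_measurable \<Omega>" for S
  proof (intro borel_measurable_times_ennreal borel_measurable_prod_ennreal)
    show "(\<lambda>\<omega>. IS S (\<lambda>i\<in>{..<n}. fst (\<omega> i))) \<in> borel_measurable \<Omega>"
      by (rule measurable_compose[OF restr_meas IS_meas])
    fix i assume "i \<in> {..<n}"
    then show "(\<lambda>\<omega>. phiS l S i (\<omega> i)) \<in> borel_measurable \<Omega>"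
      by (intro measurable_compose[OF comp_meas phiS_measurable])
  qed
  have F_meas[measurable]: "F \<in> borel_measurable \<Omega>"
    unfolding F_def[abs_def] using term_meas by measurable
  interpret GP: prob_space G unfolding G_def by (rule prob_space_gauss_vec)
  interpret PG: product_sigma_finite "\<lambda>_::nat. G"
    unfolding product_sigma_finite_def using prob_space_imp_sigma_finite[OF GP.prob_space_axioms] by blast
  define q where "q t = Phi (- \<bar>\<beta>0 + t \<bullet> \<beta>\<bar>)" for t :: "real^'d"
  have q_meas[measurable]: "q \<in> borel_measurable G"
    unfolding q_def[abs_def] G_def by (simp cong: measurable_cong_sets)
  have q01: "0 \<le> q t" "q t \<le> 1" for t by (auto simp: q_def Phi_nonneg Phi_le_1)
  have q_int: "integrable G q"
    by (rule GP.integrable_const_bound[where B=1]) (use q01 in auto)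
  have h_G: "integral\<^sup>L G q = h"
    using gauss_inner_integral[of "\<lambda>s. Phi (- \<bar>\<beta>0 + s\<bar>)" \<beta>] unfolding h_def G_def q_def by simp
  have h01: "0 \<le> h" "h \<le> 1"
  proof -
    show "0 \<le> h" unfolding h_G[symmetric] by (rule integral_nonneg_AE) (use q01 in auto)
    have "integral\<^sup>L G q \<le> integral\<^sup>L G (\<lambda>_. 1)"
      by (rule integral_mono[OF q_int]) (use q01 in auto)
    then show "h \<le> 1" unfolding h_G by (simp add: GP.prob_space)
  qed
  define gq where "gq t = 1 - (1 - exp (- l)) * q t" for t
  have gq_nonneg: "0 \<le> gq t" for t
  proof -
    have "(1 - exp (- l)) * q t \<le> 1 * 1" using q01[of t] l by (intro mult_mono) auto
    then show ?thesis by (simp add: gq_def)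
  qed
  have int_gq: "(\<integral>\<^sup>+t. ennreal (gq t) \<partial>G) = ennreal (1 - (1 - exp (- l)) * h)"
  proof -
    have gi: "integrable G gq" unfolding gq_def[abs_def] using q_int by auto
    have "(\<integral>\<^sup>+t. ennreal (gq t) \<partial>G) = ennreal (integral\<^sup>L G gq)"
      by (rule nn_integral_eq_integral[OF gi]) (use gq_nonneg in auto)
    also have "integral\<^sup>L G gq = 1 - (1 - exp (- l)) * h"
    proof -
      have "integral\<^sup>L G (\<lambda>t. 1 - (1 - exp (- l)) * q t) = integral\<^sup>L G (\<lambda>_. 1) - integral\<^sup>L G (\<lambda>t. (1 - exp (- l)) * q t)"
        by (rule Bochner_Integration.integral_diff) (use q_int in auto)
      also have "\<dots> = 1 - (1 - exp (- l)) * h" using h_G by (simp add: GP.prob_space)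
      finally show ?thesis unfolding gq_def[abs_def] .
    qed
    finally show ?thesis .
  qed
  have pw: "(\<Sum>S\<in>Pow {..<n}. IS S x * (\<Prod>i\<in>{..<n}. psi \<beta>0 \<beta> (phiS l S i) (x i)))
      \<le> ennreal Nb * (\<Prod>i\<in>{..<n}. ennreal (gq (x i)))" for x
  proof -
    have "(\<Sum>S\<in>Pow {..<n}. IS S x * (\<Prod>i\<in>{..<n}. psi \<beta>0 \<beta> (phiS l S i) (x i)))
        \<le> (\<Sum>S\<in>Pow {..<n}. IS S x * (\<Prod>i\<in>{..<n}. ennreal (gq (x i))))"
      using psi_phiS_bound[OF l] unfolding gq_def q_def
      by (intro sum_mono mult_left_mono prod_mono_ennreal) auto
    also have "\<dots> = (\<Sum>S\<in>Pow {..<n}. IS S x) * (\<Prod>i\<in>{..<n}. ennreal (gq (x i)))"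
      by (simp add: sum_distrib_right)
    also have "(\<Sum>S\<in>Pow {..<n}. IS S x) = of_nat (card {S \<in> Pow {..<n}. \<exists>d\<in>Dn. {i\<in>{..<n}. 0 < (1, x i) \<bullet> d} = S})"
      unfolding IS_def by (simp add: sum.If_cases Int_def)
    also have "\<dots> \<le> ennreal Nb"
    proof -
      have "real (card {S \<in> Pow {..<n}. \<exists>d\<in>Dn. {i\<in>{..<n}. 0 < (1, x i) \<bullet> d} = S}) \<le> Nb"
        unfolding Nb_def D_def by (rule count_patterns) (use D in \<open>simp add: D_def\<close>)
      then show ?thesis by (simp add: ennreal_of_nat_eq_real_of_nat ennreal_leI)
    qed
    finally show ?thesis by (simp add: mult_right_mono)
  qed
  have F_int: "(\<integral>\<^sup>+\<omega>. F \<omega> \<partial>\<Omega>) \<le> ennreal (exp (- 2 * \<epsilon>\<^sup>2 * real n))"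
  proof -
    let ?c = "ennreal (exp (l * (real n * \<theta>)))"
    have IS_meas': "IS S \<in> borel_measurable (PiM {..<n} (\<lambda>_. gauss_vec))" for S
      using IS_meas unfolding G_def .
    have psi_meas: "(\<lambda>x. IS S x * (\<Prod>i\<in>{..<n}. psi \<beta>0 \<beta> (phiS l S i) (x i))) \<in> borel_measurable (PiM {..<n} (\<lambda>_. G))" for S
    proof (intro borel_measurable_times_ennreal borel_measurable_prod_ennreal IS_meas)
      fix i assume i: "i \<in> {..<n}"
      have "psi \<beta>0 \<beta> (phiS l S i) \<in> borel_measurable G" unfolding G_def by (simp cong: measurable_cong_sets)
      then show "(\<lambda>x. psi \<beta>0 \<beta> (phiS l S i) (x i)) \<in> borel_measurable (PiM {..<n} (\<lambda>_. G))"
        by (rule measurable_compose[OF measurable_component_singleton[OF i]])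
    qed
    have "(\<integral>\<^sup>+\<omega>. F \<omega> \<partial>\<Omega>) = (\<Sum>S\<in>Pow {..<n}. \<integral>\<^sup>+\<omega>. ?c * (IS S (\<lambda>i\<in>{..<n}. fst (\<omega> i)) * (\<Prod>i\<in>{..<n}. phiS l S i (\<omega> i))) \<partial>\<Omega>)"
      unfolding F_def using term_meas by (subst nn_integral_sum) auto
    also have "\<dots> = (\<Sum>S\<in>Pow {..<n}. ?c * \<integral>\<^sup>+\<omega>. IS S (\<lambda>i\<in>{..<n}. fst (\<omega> i)) * (\<Prod>i\<in>{..<n}. phiS l S i (\<omega> i)) \<partial>\<Omega>)"
      using term_meas by (intro sum.cong refl nn_integral_cmult) auto
    also have "\<dots> = (\<Sum>S\<in>Pow {..<n}. ?c * \<integral>\<^sup>+x. IS S x * (\<Prod>i\<in>{..<n}. psi \<beta>0 \<beta> (phiS l S i) (x i)) \<partial>PiM {..<n} (\<lambda>_. G))"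
      unfolding \<Omega>_def' P_def G_def
      by (intro sum.cong refl arg_cong2[where f="(*)"] kernel_PiM IS_meas' phiS_measurable) auto
    also have "\<dots> = ?c * \<integral>\<^sup>+x. (\<Sum>S\<in>Pow {..<n}. IS S x * (\<Prod>i\<in>{..<n}. psi \<beta>0 \<beta> (phiS l S i) (x i))) \<partial>PiM {..<n} (\<lambda>_. G)"
      using psi_meas by (subst nn_integral_sum) (auto simp: sum_distrib_left)
    also have "\<dots> \<le> ?c * \<integral>\<^sup>+x. ennreal Nb * (\<Prod>i\<in>{..<n}. ennreal (gq (x i))) \<partial>PiM {..<n} (\<lambda>_. G)"
      by (intro mult_left_mono nn_integral_mono pw) auto
    also have "\<dots> = ?c * (ennreal Nb * (\<Prod>i\<in>{..<n}. \<integral>\<^sup>+t. ennreal (gq t) \<partial>G))"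
    proof -
      have gqm: "(\<lambda>t. ennreal (gq t)) \<in> borel_measurable G" unfolding gq_def[abs_def] by measurable
      have "(\<lambda>x. \<Prod>i\<in>{..<n}. ennreal (gq (x i))) \<in> borel_measurable (PiM {..<n} (\<lambda>_. G))"
      proof (intro borel_measurable_prod_ennreal)
        fix i assume i: "i \<in> {..<n}"
        show "(\<lambda>x. ennreal (gq (x i))) \<in> borel_measurable (PiM {..<n} (\<lambda>_. G))"
          by (rule measurable_compose[OF measurable_component_singleton[OF i] gqm])
      qed
      then show ?thesis
        by (subst nn_integral_cmult) (auto simp: PG.product_nn_integral_prod[OF _ gqm])
    qed
    also have "\<dots> = ennreal (exp (l * (real n * \<theta>)) * Nb * (1 - (1 - exp (- l)) * h) ^ n)"
    proof -
      have "0 \<le> 1 - (1 - exp (- l)) * h"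
      proof -
        have "(1 - exp (- l)) * h \<le> 1 * 1" using h01 l by (intro mult_mono) auto
        then show ?thesis by simp
      qed
      moreover have "0 \<le> Nb" by (simp add: Nb_def)
      ultimately show ?thesis unfolding int_gq
        by (simp add: ennreal_mult'[symmetric] ennreal_power mult.assoc)
    qed
    also have "\<dots> \<le> ennreal (exp (- 2 * \<epsilon>\<^sup>2 * real n))"
      by (rule ennreal_leI, unfold \<theta>_def l_def, rule numeric_bound)
         (use h01 assms(2) \<delta> in \<open>auto simp: Nb_def\<close>)
    finally show ?thesis .
  qed
  have F_bad: "1 \<le> F \<omega>" if bad: "\<not> sstar n \<omega> \<ge> real n * \<theta>" for \<omega>
  proof -
    let ?a = "\<lambda>i. (1::real, fst (\<omega> i))"
    let ?y = "\<lambda>i. snd (\<omega> i)"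
    define cnt where "cnt u = real (card {i\<in>{..<n}. ?y i * (?a i \<bullet> u) \<le> 0})" for u :: "real \<times> (real^'d)"
    have sph: "sphere (0::real \<times> (real^'d)) 1 \<noteq> {}"
    proof -
      have "(1::real, 0::real^'d) \<in> sphere 0 1" by simp
      then show ?thesis by blast
    qed
    have "sstar n \<omega> < real n * \<theta>" using bad by simp
    then obtain u where u: "u \<in> sphere 0 1" "cnt u < real n * \<theta>"
      unfolding sstar_def cnt_def using sph
      by (subst (asm) cINF_less_iff) (auto intro!: bdd_belowI[of _ 0])
    define T where "T = {i\<in>{..<n}. 0 < ?y i * (?a i \<bullet> u)}"
    define Ov where "Ov = (\<Inter>i\<in>T. {v. 0 < ?y i * (?a i \<bullet> v)})"
    have "open Ov" unfolding Ov_def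
      by (intro open_INT ballI open_Collect_less continuous_intros) (auto simp: T_def)
    moreover have "u \<in> Ov" by (auto simp: Ov_def T_def)
    ultimately obtain d where d: "d \<in> Dn" "d \<in> Ov" using Dn(2) by blast
    have cnt_d: "{i\<in>{..<n}. ?y i * (?a i \<bullet> d) \<le> 0} \<subseteq> {i\<in>{..<n}. ?y i * (?a i \<bullet> u) \<le> 0}"
      using d(2) by (force simp: Ov_def T_def)
    define S where "S = {i\<in>{..<n}. 0 < (1, fst (\<omega> i)) \<bullet> d}"
    have S: "S \<in> Pow {..<n}" by (auto simp: S_def)
    have IS1: "IS S (\<lambda>i\<in>{..<n}. fst (\<omega> i)) = 1"
    proof -
      have "{i\<in>{..<n}. 0 < (1, (\<lambda>i\<in>{..<n}. fst (\<omega> i)) i) \<bullet> d} = S"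
        by (auto simp: S_def)
      then show ?thesis unfolding IS_def using d(1) by auto
    qed
    define E where "E = {i\<in>{..<n}. (i \<in> S \<and> ?y i \<le> 0) \<or> (i \<notin> S \<and> 0 \<le> ?y i)}"
    have E_sub: "E \<subseteq> {i\<in>{..<n}. ?y i * (?a i \<bullet> d) \<le> 0}"
    proof
      fix i assume "i \<in> E"
      then show "i \<in> {i\<in>{..<n}. ?y i * (?a i \<bullet> d) \<le> 0}"
        unfolding E_def S_def
        by (auto intro: mult_nonpos_nonneg mult_nonneg_nonpos)
    qed
    have "card E \<le> card {i\<in>{..<n}. ?y i * (?a i \<bullet> d) \<le> 0}"
      by (rule card_mono[OF _ E_sub]) simp
    also have "\<dots> \<le> card {i\<in>{..<n}. ?y i * (?a i \<bullet> u) \<le> 0}"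
      by (rule card_mono[OF _ cnt_d]) simp
    finally have cardE: "real (card E) < real n * \<theta>" using u(2) unfolding cnt_def by linarith
    have prod: "(\<Prod>i\<in>{..<n}. phiS l S i (\<omega> i)) = ennreal (exp (- l * real (card E)))"
    proof -
      have "(\<Prod>i\<in>{..<n}. phiS l S i (\<omega> i)) = (\<Prod>i\<in>{..<n}. ennreal (exp (- l * (if i \<in> E then 1 else 0))))"
        by (intro prod.cong) (auto simp: phiS_def E_def)
      also have "\<dots> = ennreal (\<Prod>i\<in>{..<n}. exp (- l * (if i \<in> E then 1 else 0)))"
        by (simp add: prod_ennreal)
      also have "(\<Prod>i\<in>{..<n}. exp (- l * (if i \<in> E then 1 else 0))) = exp (\<Sum>i\<in>{..<n}. - l * (if i \<in> E then 1 else 0))"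
        by (simp add: exp_sum)
      also have "(\<Sum>i\<in>{..<n}. - l * (if i \<in> E then 1 else 0)) = - l * real (card E)"
      proof -
        have "(\<Sum>i\<in>{..<n}. (if i \<in> E then 1 else 0 :: real)) = real (card ({..<n} \<inter> E))"
          by (simp add: sum.If_cases)
        moreover have "{..<n} \<inter> E = E" by (auto simp: E_def)
        moreover have "(\<Sum>i\<in>{..<n}. - l * (if i \<in> E then 1 else 0)) = - l * (\<Sum>i\<in>{..<n}. (if i \<in> E then 1 else 0 :: real))"
          by (rule sum_distrib_left[symmetric])
        ultimately show ?thesis by simp
      qed
      finally show ?thesis .
    qed
    have "1 \<le> ennreal (exp (l * (real n * \<theta>))) * (IS S (\<lambda>i\<in>{..<n}. fst (\<omega> i)) * (\<Prod>i\<in>{..<n}. phiS l S i (\<omega> i)))"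
    proof -
      have "0 \<le> l * (real n * \<theta> - real (card E))" using l cardE by simp
      then have "1 \<le> exp (l * (real n * \<theta>) + - l * real (card E))" by (simp add: algebra_simps)
      then have "1 \<le> exp (l * (real n * \<theta>)) * exp (- l * real (card E))" by (simp only: exp_add)
      then show ?thesis unfolding IS1 prod by (simp add: ennreal_mult'[symmetric])
    qed
    also have "\<dots> \<le> F \<omega>" unfolding F_def
      by (rule member_le_sum[OF S]) auto
    finally show ?thesis .
  qed
  define B where "B = {\<omega>\<in>space \<Omega>. 1 \<le> F \<omega>}"
  have B: "B \<in> sets \<Omega>" unfolding B_def by measurable
  have "emeasure \<Omega> B \<le> 1 * (\<integral>\<^sup>+\<omega>. F \<omega> * indicator (space \<Omega>) \<omega> \<partial>\<Omega>)"
    unfolding B_def using nn_integral_Markov_inequality[of F "space \<Omega>" \<Omega> 1] by simp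
  also have "(\<integral>\<^sup>+\<omega>. F \<omega> * indicator (space \<Omega>) \<omega> \<partial>\<Omega>) = (\<integral>\<^sup>+\<omega>. F \<omega> \<partial>\<Omega>)"
    by (intro nn_integral_cong) simp
  finally have "emeasure \<Omega> B \<le> ennreal (exp (- 2 * \<epsilon>\<^sup>2 * real n))" using F_int by simp
  then have mB: "measure \<Omega> B \<le> exp (- 2 * \<epsilon>\<^sup>2 * real n)"
    by (simp add: \<Omega>.emeasure_eq_measure)
  define A where "A = space \<Omega> - B"
  have "A \<in> sets \<Omega>" unfolding A_def using B by auto
  moreover have "A \<subseteq> {\<omega>\<in>space \<Omega>. sstar n \<omega> \<ge> real n * \<theta>}"
    unfolding A_def B_def using F_bad by force
  moreover have "measure \<Omega> A \<ge> 1 - exp (- 2 * \<epsilon>\<^sup>2 * real n)"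
    using \<Omega>.prob_compl[OF B] mB unfolding A_def by simp
  ultimately show ?thesis
    unfolding \<Omega>_def \<theta>_def \<delta>_def D_def by blast
qed

end
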